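(* Let $A$ be a commutative algebra over a field with multiplication $\star$ satisfying the Tortken identity $$(a\star b)\star(c\star d)-(a\star d)\star(c\star b)=(a,b,c)\star d-(a,d,c)\star b\quad\text{for all }a,b,c,d\in A.$$ Then for all $a,b,c,x\in A$: $(a,x,b)\star c+(b,x,c)\star a+(c,x,a)\star b=0$.
   Context: The associator is $(a,b,c)=a\star(b\star c)-(a\star b)\star c$. *)

theory Defs
  imports Complex_Main
begin

definition comm_algebra ::
  "('k::field \<Rightarrow> 'a::ab_group_add \<Rightarrow> 'a) \<Rightarrow> ('a \<Rightarrow> 'a \<Rightarrow> 'a) \<Rightarrow> bool" where
  "comm_algebra sc m \<longleftrightarrow>
     vector_space sc \<and>
     (\<forall>x y z. m (x + y) z = m x z + m y z) \<and>
     (\<forall>x y z. m x (y + z) = m x y + m x z) \<and>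
     (\<forall>c x y. m (sc c x) y = sc c (m x y)) \<and>
     (\<forall>c x y. m x (sc c y) = sc c (m x y)) \<and>
     (\<forall>x y. m x y = m y x)"

definition assoc :: "('a::ab_group_add \<Rightarrow> 'a \<Rightarrow> 'a) \<Rightarrow> 'a \<Rightarrow> 'a \<Rightarrow> 'a \<Rightarrow> 'a" where
  "assoc m a b c = m a (m b c) - m (m a b) c"

definition tortken :: "('a::ab_group_add \<Rightarrow> 'a \<Rightarrow> 'a) \<Rightarrow> bool" where
  "tortken m \<longleftrightarrow> (\<forall>a b c d.
     m (m a b) (m c d) - m (m a d) (m c b) = m (assoc m a b c) d - m (assoc m a d c) b)"

end

theory Submission
  imports Defs
begin

lemma combine:
  fixes P Q R X1 X2 X3 Y1 Y2 Y3 :: "'a::ab_group_add"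
  assumes "P - Q = X1 - Y1" "Q - R = X2 - Y2" "R - P = X3 - Y3" "Y1 + Y2 + Y3 = 0"
  shows "X1 + X2 + X3 = 0"
proof -
  have "(P - Q) + (Q - R) + (R - P) = (X1 - Y1) + (X2 - Y2) + (X3 - Y3)" using assms by simp
  also have "\<dots> = (X1 + X2 + X3) - (Y1 + Y2 + Y3)" by (simp add: algebra_simps)
  finally show ?thesis using assms(4) by (simp add: algebra_simps)
qed

theorem mainTheorem6:
  fixes sc :: "'k::field \<Rightarrow> 'a::ab_group_add \<Rightarrow> 'a"
    and m :: "'a \<Rightarrow> 'a \<Rightarrow> 'a"
  assumes "comm_algebra sc m"
    and "tortken m"
  shows "\<forall>a b c x. m (assoc m a x b) c + m (assoc m b x c) a + m (assoc m c x a) b = 0"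
proof (intro allI)
  fix a b c x
  have comm: "\<And>u v. m u v = m v u" and add: "\<And>u v w. m (u + v) w = m u w + m v w"
    using assms(1) unfolding comm_algebra_def by auto
  have z: "m 0 w = 0" for w
    using add[of 0 0 w] by simp
  have T: "\<And>p q r s. m (m p q) (m r s) - m (m p s) (m r q) = m (assoc m p q r) s - m (assoc m p s r) q"
    using assms(2) unfolding tortken_def by blast
  have e1: "m c b = m b c" "m a c = m c a" "m b a = m a b" by (rule comm)+
  have f: "m a (m b c) = m (m b c) a" "m b (m c a) = m (m c a) b" "m c (m a b) = m (m a b) c"
    by (rule comm)+
  have s0: "assoc m a c b + assoc m b a c + assoc m c b a = 0"
    unfolding assoc_def e1 f by (simp only: diff_add_eq add_diff_eq diff_self add_0 diff_diff_eq) (simp add: algebra_simps)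
  have s: "m (assoc m a c b) x + m (assoc m b a c) x + m (assoc m c b a) x = 0"
    unfolding add[symmetric] s0 z ..
  have e2: "m (m a c) (m b x) = m (m b x) (m c a)" "m (m b a) (m c x) = m (m c x) (m a b)"
     "m (m c b) (m a x) = m (m a x) (m b c)"
    unfolding e1 by (rule comm)+
  have t1: "m (m a x) (m b c) - m (m a c) (m b x) = m (assoc m a x b) c - m (assoc m a c b) x" by (rule T)
  have t2: "m (m b x) (m c a) - m (m b a) (m c x) = m (assoc m b x c) a - m (assoc m b a c) x" by (rule T)
  have t3: "m (m c x) (m a b) - m (m c b) (m a x) = m (assoc m c x a) b - m (assoc m c b a) x" by (rule T)
  show "m (assoc m a x b) c + m (assoc m b x c) a + m (assoc m c x a) b = 0"
    by (rule combine[OF t1[unfolded e2] t2[unfolded e2] t3[unfolded e2] s])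
qed

end
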